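(* Let $\alpha>1$ be an integer and $\lambda_\alpha>0$, and let $y_1,y_2,\dots$ be i.i.d. Erlang random variables with shape $\alpha$ and rate $\lambda_\alpha$ (i.e. sums of $\alpha$ independent exponentials of rate $\lambda_\alpha$). With $\tau(b)=\min\{n\ge1:\sum_{i=1}^n y_i>b\}$, as $b\to\infty$, $$\operatorname{Var}(\tau(b))=\frac{\lambda_\alpha b}{\alpha^2}+\frac{1}{12}\Big(1-\frac{1}{\alpha^2}\Big)+o(1).$$ *)

theory Defs
  imports "HOL-Probability.Probability"
begin

definition first_passage :: "(nat \<Rightarrow> 'a \<Rightarrow> real) \<Rightarrow> real \<Rightarrow> 'a \<Rightarrow> nat" where
  "first_passage Y b \<omega> = (LEAST n. n \<ge> 1 \<and> (\<Sum>i=1..n. Y i \<omega>) > b)"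

end

theory Submission
  imports Defs
begin


lemma cos_eq1_dvd:
  assumes "a > 0" shows "cos (2*pi*real t / real a) = 1 \<longleftrightarrow> a dvd t"
proof
  assume "cos (2*pi*real t / real a) = 1"
  then obtain n :: int where n: "2*pi*real t / real a = of_int n * 2 * pi"
    using cos_one_2pi_int by blast
  hence "real t = of_int n * real a" using assms by (simp add: field_simps)
  hence "int t = n * int a" by (metis of_int_eq_iff of_int_mult of_int_of_nat_eq)
  thus "a dvd t" by (metis dvd_triv_right int_dvd_int_iff mult.commute)
next
  assume "a dvd t"
  then obtain q where "t = a * q" by blast
  hence "2*pi*real t / real a = of_int (int q) * 2 * pi" using assms by (simp add: field_simps)
  thus "cos (2*pi*real t / real a) = 1" using cos_one_2pi_int by blast
qed

lemma root_filter:
  assumes "a > 0"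
  shows "(\<Sum>m<a. cis (2*pi*real t / real a) ^ m) = (if a dvd t then of_nat a else 0)"
proof (cases "a dvd t")
  case True
  hence "cos (2*pi*real t / real a) = 1" using cos_eq1_dvd[OF assms] by simp
  hence "cis (2*pi*real t / real a) = 1"
  proof -
    assume c: "cos (2*pi*real t / real a) = 1"
    have "(sin (2*pi*real t / real a))^2 = 0" using sin_cos_squared_add[of "2*pi*real t / real a"] c by simp
    thus ?thesis using c by (simp add: complex_eq_iff)
  qed
  thus ?thesis using True by simp
next
  case False
  let ?z = "cis (2*pi*real t / real a)"
  have "Re ?z \<noteq> 1" using cos_eq1_dvd[OF assms] False by simp
  hence z1: "?z \<noteq> 1"
  proof -
    assume h: "Re ?z \<noteq> 1"
    show "?z \<noteq> 1"
    proof
      assume "?z = 1" hence "Re ?z = Re 1" by simp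
      thus False using h by simp
    qed
  qed
  have "?z ^ a = cis (2 * pi * real t)" unfolding Complex.DeMoivre using assms
    by (intro arg_cong[where f=cis]) (simp add: field_simps)
  also have "\<dots> = 1" by (metis Ints_of_nat cis_multiple_2pi)
  finally have za: "?z ^ a = 1" .
  have "(\<Sum>m<a. ?z ^ m) = (?z ^ a - 1) / (?z - 1)" using z1 by (subst geometric_sum) auto
  thus ?thesis using za False by simp
qed

definition pp :: "real \<Rightarrow> nat \<Rightarrow> real" where "pp \<mu> i = \<mu>^i / fact i * exp (-\<mu>)"
definition ww :: "nat \<Rightarrow> complex" where "ww a = cis (2*pi / real a)"

lemma dvd_shift_mod:
  fixes a i j :: nat assumes "j < a"
  shows "a dvd (i + (a - j)) \<longleftrightarrow> i mod a = j"
proof -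
  have ra: "i mod a < a" using assms by simp
  have "a dvd (i + (a - j)) \<longleftrightarrow> (i mod a + (a - j)) mod a = 0"
    by (simp add: dvd_eq_mod_eq_0 mod_add_left_eq)
  also have "\<dots> \<longleftrightarrow> i mod a = j"
  proof (cases "j \<le> i mod a")
    case True
    hence eq: "i mod a + (a - j) = (i mod a - j) + a" using assms by simp
    have "(i mod a + (a - j)) mod a = (i mod a - j + a) mod a" by (simp only: eq)
    also have "\<dots> = (i mod a - j) mod a" by (rule mod_add_self2)
    also have "\<dots> = i mod a - j" using ra by simp
    finally have "(i mod a + (a - j)) mod a = i mod a - j" .
    thus ?thesis using True by auto
  next
    case False
    hence "i mod a + (a - j) < a" "0 < i mod a + (a - j)" using assms by auto
    thus ?thesis using False assms by simp
  qed
  finally show ?thesis .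
qed

lemma ww_pow: "ww a ^ t = cis (2*pi*real t / real a)"
  unfolding ww_def Complex.DeMoivre by (rule arg_cong[where f=cis]) (simp add: field_simps)

lemma resid_sums:
  fixes a j :: nat assumes a: "a > 0" and j: "j < a"
  shows "(\<lambda>i. complex_of_real (pp \<mu> i * (if i mod a = j then 1 else 0))) sums
     ((\<Sum>m<a. (ww a ^ (a - j))^m * exp (of_real \<mu> * (ww a ^ m - 1))) / of_nat a)"
proof -
  have e: "(\<lambda>i. (ww a ^ (a - j))^m * (of_real (pp \<mu> i) * (ww a^m)^i)) sums
      ((ww a ^ (a - j))^m * exp (of_real \<mu> * (ww a ^ m - 1)))" for m
  proof -
    have "(\<lambda>i. (of_real \<mu> * ww a^m)^i /\<^sub>R fact i) sums exp (of_real \<mu> * ww a^m)"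
      by (rule exp_converges)
    from sums_mult[OF this, of "(ww a ^ (a - j))^m * exp (- of_real \<mu>)"]
    have "(\<lambda>i. (ww a ^ (a - j))^m * exp (- of_real \<mu>) * ((of_real \<mu> * ww a^m)^i /\<^sub>R fact i)) sums
       ((ww a ^ (a - j))^m * exp (- of_real \<mu>) * exp (of_real \<mu> * ww a^m))" .
    moreover have "exp (- of_real \<mu>) * exp (of_real \<mu> * ww a^m) = exp (of_real \<mu> * (ww a ^ m - 1))"
      by (simp add: exp_add[symmetric] algebra_simps)
    moreover have "(ww a ^ (a - j))^m * exp (- of_real \<mu>) * ((of_real \<mu> * ww a^m)^i /\<^sub>R fact i)
        = (ww a ^ (a - j))^m * (of_real (pp \<mu> i) * (ww a^m)^i)" for i
      by (simp add: pp_def scaleR_conv_of_real power_mult_distrib exp_of_real[symmetric] field_simps)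
    ultimately show ?thesis by (simp add: mult.assoc)
  qed
  have "(\<lambda>i. \<Sum>m<a. (ww a ^ (a - j))^m * (of_real (pp \<mu> i) * (ww a^m)^i)) sums
      (\<Sum>m<a. (ww a ^ (a - j))^m * exp (of_real \<mu> * (ww a ^ m - 1)))"
    by (rule sums_sum) (rule e)
  moreover have "(\<Sum>m<a. (ww a ^ (a - j))^m * (of_real (pp \<mu> i) * (ww a^m)^i))
     = of_nat a * complex_of_real (pp \<mu> i * (if i mod a = j then 1 else 0))" for i
  proof -
    have "(\<Sum>m<a. (ww a ^ (a - j))^m * (of_real (pp \<mu> i) * (ww a^m)^i))
       = of_real (pp \<mu> i) * (\<Sum>m<a. (ww a ^ (i + (a - j)))^m)"
      by (simp add: sum_distrib_left power_mult[symmetric] power_add[symmetric] algebra_simps)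
    also have "(\<Sum>m<a. (ww a ^ (i + (a - j)))^m) = (if a dvd (i + (a - j)) then of_nat a else 0)"
      unfolding ww_pow by (rule root_filter[OF a])
    finally show ?thesis using dvd_shift_mod[OF j, of i] by simp
  qed
  ultimately have "(\<lambda>i. of_nat a * complex_of_real (pp \<mu> i * (if i mod a = j then 1 else 0))) sums
      (\<Sum>m<a. (ww a ^ (a - j))^m * exp (of_real \<mu> * (ww a ^ m - 1)))" by simp
  from sums_mult[OF this, of "1 / of_nat a"] show ?thesis using a by simp
qed

definition Cc :: "nat \<Rightarrow> nat \<Rightarrow> real \<Rightarrow> complex" where
  "Cc a j \<mu> = (\<Sum>m\<in>{1..<a}. (ww a ^ (a - j))^m * exp (of_real \<mu> * (ww a ^ m - 1)))"

definition pis :: "nat \<Rightarrow> nat \<Rightarrow> real \<Rightarrow> real" where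
  "pis a j \<mu> = (\<Sum>i. pp \<mu> i * (if i mod a = j then 1 else 0))"

lemma resid_real:
  fixes a j :: nat assumes a: "a > 0" and j: "j < a"
  shows "(\<lambda>i. pp \<mu> i * (if i mod a = j then 1 else 0)) sums ((1 + Re (Cc a j \<mu>)) / real a)"
proof -
  have s: "{..<a} = insert 0 {1..<a}" using a by auto
  have "(\<Sum>m<a. (ww a ^ (a - j))^m * exp (of_real \<mu> * (ww a ^ m - 1))) = 1 + Cc a j \<mu>"
    unfolding s Cc_def by simp
  with sums_Re[OF resid_sums[OF a j, of \<mu>]] show ?thesis by simp
qed

lemma pis_eq: "a > 0 \<Longrightarrow> j < a \<Longrightarrow> real a * pis a j \<mu> - 1 = Re (Cc a j \<mu>)"
  using resid_real[of a j \<mu>] unfolding pis_def by (simp add: sums_iff)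

lemma norm_Cc: "norm (Cc a j \<mu>) \<le> (\<Sum>m\<in>{1..<a}. exp (\<mu> * (cos (2*pi*real m / real a) - 1)))"
  unfolding Cc_def
proof (rule order.trans[OF norm_sum], rule sum_mono)
  fix m assume "m \<in> {1..<a}"
  have n1: "norm ((ww a ^ (a - j))^m) = 1" by (simp add: ww_def norm_power)
  have r: "Re (ww a ^ m) = cos (2*pi*real m / real a)"
    by (simp add: ww_pow)
  show "norm ((ww a ^ (a - j))^m * exp (of_real \<mu> * (ww a ^ m - 1)))
     \<le> exp (\<mu> * (cos (2*pi*real m / real a) - 1))" by (simp add: norm_mult n1 r)
qed

lemma lim_mu_exp: "d > 0 \<Longrightarrow> ((\<lambda>\<mu>::real. \<mu> * exp (\<mu> * (- d))) \<longlongrightarrow> 0) at_top"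
  by real_asymp

lemma resid_lim:
  fixes a j :: nat assumes a: "a > 0" and j: "j < a"
  shows "((\<lambda>\<mu>. \<mu> * (real a * pis a j \<mu> - 1)) \<longlongrightarrow> 0) at_top"
proof (rule Lim_null_comparison)
  show "eventually (\<lambda>\<mu>. norm (\<mu> * (real a * pis a j \<mu> - 1))
     \<le> (\<Sum>m\<in>{1..<a}. \<mu> * exp (\<mu> * (- (1 - cos (2*pi*real m / real a)))))) at_top"
    using eventually_ge_at_top[of "0::real"]
  proof eventually_elim
    case (elim \<mu>)
    have "norm (\<mu> * (real a * pis a j \<mu> - 1)) = \<mu> * \<bar>Re (Cc a j \<mu>)\<bar>"
      using elim pis_eq[OF a j] by (simp add: abs_mult)
    also have "\<dots> \<le> \<mu> * norm (Cc a j \<mu>)"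
      using elim abs_Re_le_cmod by (intro mult_left_mono) auto
    also have "\<dots> \<le> \<mu> * (\<Sum>m\<in>{1..<a}. exp (\<mu> * (cos (2*pi*real m / real a) - 1)))"
      using elim norm_Cc by (intro mult_left_mono) auto
    finally show ?case by (simp add: sum_distrib_left)
  qed
  show "((\<lambda>\<mu>. \<Sum>m\<in>{1..<a}. \<mu> * exp (\<mu> * (- (1 - cos (2*pi*real m / real a)))))
      \<longlongrightarrow> 0) at_top"
  proof (rule tendsto_null_sum, rule lim_mu_exp)
    fix m assume m: "m \<in> {1..<a}"
    hence "\<not> a dvd m" by (auto dest: dvd_imp_le)
    hence "cos (2*pi*real m / real a) \<noteq> 1" using cos_eq1_dvd[OF a] by simp
    moreover have "cos (2*pi*real m / real a) \<le> 1" by simp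
    ultimately show "0 < 1 - cos (2*pi*real m / real a)" by linarith
  qed
qed



lemma sums_eqI: "f sums x \<Longrightarrow> (\<And>i. f i = g i) \<Longrightarrow> x = y \<Longrightarrow> g sums y"
  by (metis sums_cong)

lemma pp_nonneg: "\<mu> \<ge> 0 \<Longrightarrow> pp \<mu> i \<ge> 0"
  by (simp add: pp_def)

lemma pp_sums: "pp \<mu> sums 1"
proof -
  have "(\<lambda>i. \<mu>^i /\<^sub>R fact i * exp (-\<mu>)) sums (exp \<mu> * exp (-\<mu>))"
    by (rule sums_mult2[OF exp_converges])
  thus ?thesis by (rule sums_eqI) (simp_all add: pp_def exp_minus_inverse divide_inverse)
qed

lemma pp_shift:
  assumes "(\<lambda>i. pp \<mu> i * g (Suc i)) sums s"
  shows "(\<lambda>i. pp \<mu> i * real i * g i) sums (\<mu> * s)"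
proof -
  have "(\<lambda>i. pp \<mu> (Suc i) * real (Suc i) * g (Suc i)) sums (\<mu> * s)"
  proof (rule sums_eqI[OF sums_mult[OF assms, of \<mu>]])
    fix i show "\<mu> * (pp \<mu> i * g (Suc i)) = pp \<mu> (Suc i) * real (Suc i) * g (Suc i)"
    proof -
      have f: "(fact (Suc i) :: real) = real (Suc i) * fact i" by (rule fact_Suc)
      have "pp \<mu> (Suc i) * real (Suc i) = \<mu> * pp \<mu> i"
        unfolding pp_def f by (simp add: field_simps del: of_nat_Suc)
      thus ?thesis by (simp add: algebra_simps)
    qed
  qed simp
  thus ?thesis by (subst (asm) sums_Suc_iff) simp
qed

lemma pp_bounded_summable:
  assumes "\<mu> \<ge> 0" "\<And>i. \<bar>g i\<bar> \<le> B"
  shows "summable (\<lambda>i. pp \<mu> i * g i)"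
proof (rule summable_comparison_test')
  show "summable (\<lambda>i. B * pp \<mu> i)" using pp_sums sums_summable summable_mult by blast
  fix i show "norm (pp \<mu> i * g i) \<le> B * pp \<mu> i"
  proof -
    have "pp \<mu> i * \<bar>g i\<bar> \<le> pp \<mu> i * B"
      using mult_left_mono[OF assms(2)[of i] pp_nonneg[OF assms(1)]] .
    thus ?thesis using pp_nonneg[OF assms(1), of i] by (simp add: abs_mult mult.commute)
  qed
qed

lemma pp_sums1: "(\<lambda>i. pp \<mu> i * real i) sums \<mu>"
  using pp_shift[of \<mu> "\<lambda>_. 1" 1] pp_sums by simp

lemma pp_sums2: "(\<lambda>i. pp \<mu> i * real i * real i) sums (\<mu> * (\<mu> + 1))"
proof (rule pp_shift)
  show "(\<lambda>i. pp \<mu> i * real (Suc i)) sums (\<mu> + 1)"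
    by (rule sums_eqI[OF sums_add[OF pp_sums1 pp_sums]]) (simp_all add: algebra_simps)
qed

definition Cs :: "nat \<Rightarrow> real \<Rightarrow> real" where "Cs a \<mu> = (\<Sum>j<a. real j * pis a j \<mu>)"
definition Ds :: "nat \<Rightarrow> real \<Rightarrow> real" where "Ds a \<mu> = (\<Sum>j<a. real j ^ 2 * pis a j \<mu>)"
definition mf :: "nat \<Rightarrow> real \<Rightarrow> real" where "mf a \<mu> = 1 + (\<mu> - Cs a \<mu>) / real a"
definition Vf :: "nat \<Rightarrow> real \<Rightarrow> real" where
  "Vf a \<mu> = (\<mu> - 2 * \<mu> * (1 - real a * pis a (a - 1) \<mu>) + Ds a \<mu> - (Cs a \<mu>)^2) / (real a)^2"

lemma pis_sums: "a > 0 \<Longrightarrow> j < a \<Longrightarrow> (\<lambda>i. pp \<mu> i * (if i mod a = j then 1 else 0)) sums pis a j \<mu>"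
  unfolding pis_def using resid_real sums_summable summable_sums by blast

lemma mod_as_sum: fixes f :: "nat \<Rightarrow> real" shows "a > 0 \<Longrightarrow> f (i mod a) = (\<Sum>j<a. f j * (if i mod a = j then 1 else 0))"
proof -
  assume a: "a > 0"
  have "(\<Sum>j<a. f j * (if i mod a = j then 1 else 0)) = (\<Sum>j<a. if i mod a = j then f j else 0)"
    by (rule sum.cong) auto
  also have "\<dots> = f (i mod a)" using a by (subst sum.delta') auto
  finally show ?thesis by simp
qed

lemma R_sums: fixes f :: "nat \<Rightarrow> real" shows "a > 0 \<Longrightarrow> (\<lambda>i. pp \<mu> i * f (i mod a)) sums (\<Sum>j<a. f j * pis a j \<mu>)"
proof -
  assume a: "a > 0"
  have "(\<lambda>i. \<Sum>j<a. f j * (pp \<mu> i * (if i mod a = j then 1 else 0))) sums (\<Sum>j<a. f j * pis a j \<mu>)"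
    by (rule sums_sum, rule sums_mult, rule pis_sums[OF a]) simp
  thus ?thesis
  proof (rule sums_eqI)
    fix i
    have "(\<Sum>j<a. f j * (pp \<mu> i * (if i mod a = j then 1 else 0)))
        = pp \<mu> i * (\<Sum>j<a. f j * (if i mod a = j then 1 else 0))"
      by (simp add: sum_distrib_left mult.left_commute)
    also have "\<dots> = pp \<mu> i * f (i mod a)" using mod_as_sum[OF a, of f i] by simp
    finally show "(\<Sum>j<a. f j * (pp \<mu> i * (if i mod a = j then 1 else 0))) = pp \<mu> i * f (i mod a)" .
  qed simp
qed

lemma RSuc_sums:
  assumes a: "a > 0"
  shows "(\<lambda>i. pp \<mu> i * (real (Suc i mod a) - real (i mod a))) sums (1 - real a * pis a (a - 1) \<mu>)"
proof -
  have "(\<lambda>i. pp \<mu> i - real a * (pp \<mu> i * (if i mod a = a - 1 then 1 else 0))) sums (1 - real a * pis a (a - 1) \<mu>)"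
    by (intro sums_diff sums_mult pp_sums pis_sums a) (use a in simp)
  thus ?thesis
  proof (rule sums_eqI)
    fix i
    have "real (Suc i mod a) - real (i mod a) = 1 - real a * (if i mod a = a - 1 then 1 else 0)"
      using a mod_less_divisor[OF a, of i] by (auto simp: mod_Suc of_nat_diff)
    hence "pp \<mu> i * (real (Suc i mod a) - real (i mod a)) = pp \<mu> i * (1 - real a * (if i mod a = a - 1 then 1 else 0))"
      by (simp only:)
    also have "\<dots> = pp \<mu> i - real a * (pp \<mu> i * (if i mod a = a - 1 then 1 else 0))"
      by (simp only: right_diff_distrib mult_1_right mult.left_commute)
    finally show "pp \<mu> i - real a * (pp \<mu> i * (if i mod a = a - 1 then 1 else 0)) =
      pp \<mu> i * (real (Suc i mod a) - real (i mod a))" by simp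
  qed simp
qed



lemma real_div_mod: "a > 0 \<Longrightarrow> real (Suc (i div a)) = 1 + (real i - real (i mod a)) / real a"
proof -
  assume a: "a > 0"
  have "real i = real a * real (i div a) + real (i mod a)"
    by (metis of_nat_add of_nat_mult div_mult_mod_eq mult.commute)
  thus ?thesis using a by (simp add: field_simps)
qed

lemma real_div_mod': "a > 0 \<Longrightarrow> real (i div a) = (real i - real (i mod a)) / real a"
  using real_div_mod[of a i] by simp

lemma X_sums:
  assumes a: "a > 0"
  shows "(\<lambda>i. pp \<mu> i * real (Suc (i div a))) sums mf a \<mu>"
proof -
  have C: "(\<lambda>i. pp \<mu> i * real (i mod a)) sums Cs a \<mu>"
    unfolding Cs_def using R_sums[OF a, of \<mu> real] by simp
  have "(\<lambda>i. pp \<mu> i + (pp \<mu> i * real i - pp \<mu> i * real (i mod a)) / real a) sums (1 + (\<mu> - Cs a \<mu>) / real a)"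
    by (intro sums_add sums_divide sums_diff pp_sums pp_sums1 C)
  thus ?thesis
    by (rule sums_eqI) (use a in \<open>simp_all add: real_div_mod'[OF a] mf_def field_simps\<close>)
qed

lemma V_sums:
  assumes a: "a > 0"
  shows "(\<lambda>i. pp \<mu> i * (real (Suc (i div a)) - mf a \<mu>)^2) sums Vf a \<mu>"
proof -
  define C where "C = Cs a \<mu>"
  have Cc: "(\<lambda>i. pp \<mu> i * real (i mod a)) sums C"
    unfolding C_def Cs_def using R_sums[OF a, of \<mu> real] by simp
  have Dc: "(\<lambda>i. pp \<mu> i * real (i mod a) ^ 2) sums Ds a \<mu>"
    unfolding Ds_def using R_sums[OF a, of \<mu> "\<lambda>j. real j ^ 2"] by simp
  have su2: "(\<lambda>i. pp \<mu> i * (real i - \<mu>)^2) sums \<mu>"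
  proof -
    have "(\<lambda>i. pp \<mu> i * real i * real i - 2 * \<mu> * (pp \<mu> i * real i) + \<mu>^2 * pp \<mu> i)
        sums (\<mu> * (\<mu> + 1) - 2 * \<mu> * \<mu> + \<mu>^2 * 1)"
      by (intro sums_add sums_diff sums_mult pp_sums pp_sums1 pp_sums2)
    thus ?thesis by (rule sums_eqI) (simp_all add: power2_eq_square algebra_simps)
  qed
  have sR1: "(\<lambda>i. pp \<mu> i * real (Suc i mod a)) sums ((1 - real a * pis a (a - 1) \<mu>) + C)"
    by (rule sums_eqI[OF sums_add[OF RSuc_sums[OF a, of \<mu>] Cc]]) (simp_all add: algebra_simps)
  have suv: "(\<lambda>i. pp \<mu> i * (real i - \<mu>) * (real (i mod a) - C)) sums (\<mu> * (1 - real a * pis a (a - 1) \<mu>))"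
  proof -
    have iR: "(\<lambda>i. pp \<mu> i * real i * real (i mod a)) sums (\<mu> * ((1 - real a * pis a (a - 1) \<mu>) + C))"
      by (rule pp_shift[OF sR1])
    have "(\<lambda>i. pp \<mu> i * real i * real (i mod a) - C * (pp \<mu> i * real i)
          - \<mu> * (pp \<mu> i * real (i mod a)) + \<mu> * C * pp \<mu> i)
        sums (\<mu> * ((1 - real a * pis a (a - 1) \<mu>) + C) - C * \<mu> - \<mu> * C + \<mu> * C * 1)"
      by (intro sums_add sums_diff sums_mult pp_sums pp_sums1 iR Cc)
    thus ?thesis by (rule sums_eqI) (simp_all add: algebra_simps)
  qed
  have sv2: "(\<lambda>i. pp \<mu> i * (real (i mod a) - C)^2) sums (Ds a \<mu> - C^2)"
  proof -
    have "(\<lambda>i. pp \<mu> i * real (i mod a) ^ 2 - 2 * C * (pp \<mu> i * real (i mod a)) + C^2 * pp \<mu> i)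
        sums (Ds a \<mu> - 2 * C * C + C^2 * 1)"
      by (intro sums_add sums_diff sums_mult pp_sums Dc Cc)
    thus ?thesis by (rule sums_eqI) (simp_all add: power2_eq_square algebra_simps)
  qed
  have "(\<lambda>i. (pp \<mu> i * (real i - \<mu>)^2 - 2 * (pp \<mu> i * (real i - \<mu>) * (real (i mod a) - C))
        + pp \<mu> i * (real (i mod a) - C)^2) / (real a)^2)
      sums ((\<mu> - 2 * (\<mu> * (1 - real a * pis a (a - 1) \<mu>)) + (Ds a \<mu> - C^2)) / (real a)^2)"
    by (intro sums_divide sums_add sums_diff sums_mult su2 suv sv2)
  thus ?thesis
  proof (rule sums_eqI)
    fix i
    have d: "real (Suc (i div a)) - mf a \<mu> = ((real i - \<mu>) - (real (i mod a) - C)) / real a"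
    proof -
      have eqi: "real (i mod a) + real a * real (i div a) = real i"
        by (metis of_nat_add of_nat_mult mod_mult_div_eq)
      show ?thesis using a by (simp add: mf_def C_def field_simps eqi)
    qed
    show "(pp \<mu> i * (real i - \<mu>)^2 - 2 * (pp \<mu> i * (real i - \<mu>) * (real (i mod a) - C))
        + pp \<mu> i * (real (i mod a) - C)^2) / (real a)^2 = pp \<mu> i * (real (Suc (i div a)) - mf a \<mu>)^2"
      unfolding d using a by (simp add: power2_eq_square field_simps)
  qed (unfold Vf_def C_def, simp add: algebra_simps)
qed

lemma sum_j: "(\<Sum>j<a. real j) = real a * (real a - 1) / 2"
  by (induction a) (simp_all add: field_simps)

lemma sum_j2: "(\<Sum>j<a. real j ^ 2) = real a * (real a - 1) * (2 * real a - 1) / 6"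
  by (induction a) (simp_all add: field_simps power2_eq_square)

lemma pis_lim:
  assumes a: "a > 0" and j: "j < a"
  shows "((\<lambda>\<mu>. pis a j \<mu>) \<longlongrightarrow> 1 / real a) at_top"
proof -
  have "((\<lambda>\<mu>. (1 + (\<mu> * (real a * pis a j \<mu> - 1)) * (1 / \<mu>)) / real a) \<longlongrightarrow> (1 + 0 * 0) / real a) at_top"
    by (intro tendsto_intros resid_lim[OF a j] tendsto_divide_0[OF tendsto_const] filterlim_at_top_imp_at_infinity filterlim_ident)
       (use a in simp)
  moreover have "eventually (\<lambda>\<mu>. (1 + (\<mu> * (real a * pis a j \<mu> - 1)) * (1 / \<mu>)) / real a = pis a j \<mu>) at_top"
    using eventually_gt_at_top[of "0::real"] by eventually_elim (use a in \<open>simp add: field_simps\<close>)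
  ultimately show ?thesis by (simp add: tendsto_cong)
qed

lemma Vf_lim:
  assumes a: "a > 0"
  shows "((\<lambda>\<mu>. Vf a \<mu> - (\<mu> / real a ^ 2 + 1 / 12 * (1 - 1 / real a ^ 2))) \<longlongrightarrow> 0) at_top"
proof -
  have P: "((\<lambda>\<mu>. \<mu> * (real a * pis a (a - 1) \<mu> - 1)) \<longlongrightarrow> 0) at_top"
    using resid_lim[OF a, of "a - 1"] a by simp
  have D: "((\<lambda>\<mu>. Ds a \<mu>) \<longlongrightarrow> (\<Sum>j<a. real j ^ 2 * (1 / real a))) at_top"
    unfolding Ds_def by (intro tendsto_sum tendsto_mult tendsto_const pis_lim a) simp
  have C: "((\<lambda>\<mu>. Cs a \<mu>) \<longlongrightarrow> (\<Sum>j<a. real j * (1 / real a))) at_top"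
    unfolding Cs_def by (intro tendsto_sum tendsto_mult tendsto_const pis_lim a) simp
  have L: "((\<lambda>\<mu>. (2 * (\<mu> * (real a * pis a (a - 1) \<mu> - 1)) + Ds a \<mu> - (Cs a \<mu>)^2
       - (real a ^ 2 - 1) / 12) / real a ^ 2) \<longlongrightarrow>
     (2 * 0 + (\<Sum>j<a. real j ^ 2 * (1 / real a)) - (\<Sum>j<a. real j * (1 / real a))^2
       - (real a ^ 2 - 1) / 12) / real a ^ 2) at_top"
    by (intro tendsto_intros P D C) (use a in simp)
  have "(\<Sum>j<a. real j ^ 2 * (1 / real a)) - (\<Sum>j<a. real j * (1 / real a))^2 = (real a ^ 2 - 1) / 12"
  proof -
    have "real a \<noteq> 0" "real a ^ 2 \<noteq> 0" using a by auto
    moreover have "(\<Sum>j<a. real j ^ 2 * (1 / real a)) = (\<Sum>j<a. real j ^ 2) / real a"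
      by (simp add: sum_divide_distrib)
    moreover have "(\<Sum>j<a. real j * (1 / real a)) = (\<Sum>j<a. real j) / real a"
      by (simp add: sum_divide_distrib)
    ultimately show ?thesis by (simp only: sum_j sum_j2) (simp add: field_simps power2_eq_square)
  qed
  hence "(2 * 0 + (\<Sum>j<a. real j ^ 2 * (1 / real a)) - (\<Sum>j<a. real j * (1 / real a))^2
       - (real a ^ 2 - 1) / 12) / real a ^ 2 = 0" by simp
  note eq0 = this
  have L': "((\<lambda>\<mu>. (2 * (\<mu> * (real a * pis a (a - 1) \<mu> - 1)) + Ds a \<mu> - (Cs a \<mu>)^2
       - (real a ^ 2 - 1) / 12) / real a ^ 2) \<longlongrightarrow> 0) at_top" using L unfolding eq0 .
  have "(2 * (\<mu> * (real a * pis a (a - 1) \<mu> - 1)) + Ds a \<mu> - (Cs a \<mu>)^2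
       - (real a ^ 2 - 1) / 12) / real a ^ 2 = Vf a \<mu> - (\<mu> / real a ^ 2 + 1 / 12 * (1 - 1 / real a ^ 2))" for \<mu>
  proof -
    have "real a ^ 2 \<noteq> 0" using a by simp
    thus ?thesis by (simp add: Vf_def field_simps)
  qed
  with L' show ?thesis by simp
qed



lemma pois_integral:
  assumes mu: "\<mu> > 0" and s: "(\<lambda>j. pp \<mu> j * f j) sums s" and nn: "\<And>j. f j \<ge> 0"
  shows "measure_pmf.expectation (poisson_pmf \<mu>) f = s"
proof -
  have "measure_pmf.expectation (poisson_pmf \<mu>) f
      = integral\<^sup>L (count_space UNIV) (\<lambda>j. pmf (poisson_pmf \<mu>) j *\<^sub>R f j)"
    unfolding measure_pmf_eq_density by (rule integral_density) auto
  also have "\<dots> = integral\<^sup>L (count_space UNIV) (\<lambda>j. pp \<mu> j * f j)"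
    using mu by (simp add: pp_def)
  also have "\<dots> = (\<Sum>j. pp \<mu> j * f j)"
  proof (rule integral_count_space_nat)
    have "summable (\<lambda>j. pp \<mu> j * f j)" using s by (rule sums_summable)
    moreover have "norm (pp \<mu> j * f j) = pp \<mu> j * f j" for j
      using nn[of j] pp_nonneg[of \<mu> j] mu by simp
    ultimately show "integrable (count_space UNIV) (\<lambda>j. pp \<mu> j * f j)"
      by (simp add: integrable_count_space_nat_iff)
  qed
  also have "\<dots> = s" using s by (simp add: sums_iff)
  finally show ?thesis .
qed

lemma fp_gt:
  fixes y :: "nat \<Rightarrow> real"
  assumes pos: "\<forall>i. 1 \<le> i \<longrightarrow> 0 < y i" and ex: "\<exists>n\<ge>1. b < (\<Sum>i=1..n. y i)" and b: "b \<ge> 0"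
  shows "k < (LEAST n. n \<ge> 1 \<and> b < (\<Sum>i=1..n. y i)) \<longleftrightarrow> (\<Sum>i=1..k. y i) \<le> b"
proof -
  define L where "L = (LEAST n. n \<ge> 1 \<and> b < (\<Sum>i=1..n. y i))"
  have mono: "m \<le> n \<Longrightarrow> (\<Sum>i=1..m. y i) \<le> (\<Sum>i=1..n. y i)" for m n
  proof (rule sum_mono2)
    assume mn: "m \<le> n"
    show "finite {1..n}" by simp
    show "{1..m} \<subseteq> {1..n}" using mn by auto
    fix i assume "i \<in> {1..n} - {1..m}"
    hence "1 \<le> i" by simp
    thus "0 \<le> y i" using pos less_imp_le by blast
  qed
  have PL: "L \<ge> 1 \<and> b < (\<Sum>i=1..L. y i)" unfolding L_def
    by (rule LeastI_ex) (use ex in blast)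
  have le: "n \<ge> 1 \<Longrightarrow> b < (\<Sum>i=1..n. y i) \<Longrightarrow> L \<le> n" for n unfolding L_def by (rule Least_le) simp
  show ?thesis unfolding L_def[symmetric]
  proof
    assume kL: "k < L"
    show "(\<Sum>i=1..k. y i) \<le> b"
    proof (rule ccontr)
      assume "\<not> (\<Sum>i=1..k. y i) \<le> b"
      hence bk: "b < (\<Sum>i=1..k. y i)" by simp
      show False
      proof (cases "k = 0")
        case True thus False using bk b by simp
      next
        case False thus False using le[of k] bk kL by simp
      qed
    qed
  next
    assume kb: "(\<Sum>i=1..k. y i) \<le> b"
    show "k < L"
    proof (rule ccontr)
      assume "\<not> k < L"
      hence "(\<Sum>i=1..L. y i) \<le> (\<Sum>i=1..k. y i)" using mono by simp
      thus False using PL kb by simp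
    qed
  qed
qed

lemma div_block: fixes a j q :: nat shows "a > 0 \<Longrightarrow> (j div a = q) \<longleftrightarrow> (j \<in> {q*a..<q*a+a})"
proof
  assume a: "a > 0" and q: "j div a = q"
  have e: "j = q * a + j mod a" using div_mult_mod_eq[of j a] q by simp
  have m: "j mod a < a" using a by simp
  have "q * a \<le> j" using e by linarith
  moreover have "j < q * a + a" using e m by linarith
  ultimately show "j \<in> {q*a..<q*a+a}" by simp
next
  assume a: "a > 0" and h: "j \<in> {q*a..<q*a+a}"
  have h1: "a * q \<le> j" using h by (simp add: mult.commute)
  have h2: "j < a * Suc q" using h by (simp add: mult.commute)
  show "j div a = q" by (rule div_nat_eqI[OF h1 h2])
qed



lemma (in prob_space) var_eq:
  fixes Y :: "nat \<Rightarrow> 'a \<Rightarrow> real"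
  assumes a: "a > 0" and l: "l > 0" and b: "b > 0"
    and ind: "indep_vars (\<lambda>_. borel) Y {1..}"
    and d: "\<And>i. i \<ge> 1 \<Longrightarrow> distributed M lborel (Y i) (erlang_density (a - 1) l)"
  shows "variance (\<lambda>\<omega>. real (first_passage Y b \<omega>)) = Vf a (l * b)"
proof -
  define \<mu> where "\<mu> = l * b"
  have mu: "\<mu> > 0" using l b by (simp add: \<mu>_def)
  have Ym: "i \<ge> 1 \<Longrightarrow> Y i \<in> borel_measurable M" for i
    using distributed_measurable[OF d[of i]] by simp
  define S where "S n \<omega> = (\<Sum>i=1..n. Y i \<omega>)" for n \<omega>
  have Sm[measurable]: "S n \<in> borel_measurable M" for n
    unfolding S_def by (rule borel_measurable_sum) (simp add: Ym)
  have Sd: "distributed M lborel (S n) (erlang_density (n * a - 1) l)" if n: "n \<ge> 1" for n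
  proof -
    have "distributed M lborel (\<lambda>x. \<Sum>i\<in>{1..n}. Y i x) (erlang_density ((\<Sum>i\<in>{1..n}. Suc (a - 1)) - 1) l)"
      by (rule erlang_distributed_sum) (use n l d in \<open>auto intro: indep_vars_subset[OF ind]\<close>)
    moreover have "(\<Sum>i\<in>{1..n}. Suc (a - 1)) - 1 = n * a - 1" using a by simp
    moreover have "(\<lambda>x. \<Sum>i\<in>{1..n}. Y i x) = S n" by (simp add: S_def fun_eq_iff)
    ultimately show ?thesis by simp
  qed
  define tail where "tail n = 1 - (\<Sum>j<n * a. pp \<mu> j)" for n
  have PS: "prob {\<omega>\<in>space M. S n \<omega> \<le> b} = tail n" for n
  proof (cases "n = 0")
    case True
    hence "{\<omega>\<in>space M. S n \<omega> \<le> b} = space M" using b by (auto simp: S_def)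
    thus ?thesis using True by (simp add: tail_def prob_space)
  next
    case False
    hence "prob {\<omega>\<in>space M. S n \<omega> \<le> b} = erlang_CDF (n * a - 1) l b"
      using erlang_distributed_le[OF Sd l, of n b] b by simp
    also have "\<dots> = 1 - (\<Sum>k\<le>n * a - 1. (l * b)^k * exp (- l * b) / fact k)"
      using b by (simp add: erlang_CDF_def)
    also have "{..n * a - 1} = {..<n * a}" using False a
      by (metis Suc_diff_1 lessThan_Suc_atMost nat_0_less_mult_iff neq0_conv)
    also have "(\<Sum>k\<in>{..<n * a}. (l * b)^k * exp (- l * b) / fact k) = (\<Sum>j<n * a. pp \<mu> j)"
      by (simp add: pp_def \<mu>_def)
    finally show ?thesis by (simp add: tail_def)
  qed
  have pos: "AE \<omega> in M. \<forall>i. 1 \<le> i \<longrightarrow> 0 < Y i \<omega>"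
    unfolding AE_all_countable
  proof
    fix i :: nat
    show "AE \<omega> in M. 1 \<le> i \<longrightarrow> 0 < Y i \<omega>"
    proof (cases "1 \<le> i")
      case False thus ?thesis by simp
    next
      case True
      have m: "{\<omega>\<in>space M. Y i \<omega> \<le> 0} \<in> sets M" using Ym[OF True] by measurable
      have "prob {\<omega>\<in>space M. Y i \<omega> \<le> 0} = erlang_CDF (a - 1) l 0"
        using erlang_distributed_le[OF d[OF True] l, of 0] by simp
      also have "\<dots> = 0" by (rule erlang_CDF_at0)
      finally have "{\<omega>\<in>space M. Y i \<omega> \<le> 0} \<in> null_sets M"
        using m by (simp add: null_sets_def emeasure_eq_measure)
      thus ?thesis by (rule AE_I') auto
    qed
  qed
  have tail_lim: "tail \<longlonglongrightarrow> 0"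
  proof -
    have "(\<lambda>n. \<Sum>j<n. pp \<mu> j) \<longlonglongrightarrow> 1" using pp_sums by (simp add: sums_def)
    moreover have "strict_mono (\<lambda>n. n * a)" using a by (intro strict_monoI) simp
    ultimately have "((\<lambda>n. \<Sum>j<n. pp \<mu> j) \<circ> (\<lambda>n. n * a)) \<longlonglongrightarrow> 1" by (rule LIMSEQ_subseq_LIMSEQ)
    hence "(\<lambda>n. 1 - (\<Sum>j<n * a. pp \<mu> j)) \<longlonglongrightarrow> 1 - 1" by (intro tendsto_diff tendsto_const) (simp add: o_def)
    thus ?thesis by (simp add: tail_def[abs_def])
  qed
  have ex: "AE \<omega> in M. \<exists>n\<ge>1. b < S n \<omega>"
  proof (rule AE_I')
    define N where "N = {\<omega>\<in>space M. \<forall>n. 1 \<le> n \<longrightarrow> S n \<omega> \<le> b}"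
    have N: "N \<in> sets M" unfolding N_def by measurable
    have "prob N \<le> tail n" if "n \<ge> 1" for n
    proof -
      have "prob N \<le> prob {\<omega>\<in>space M. S n \<omega> \<le> b}"
        by (rule finite_measure_mono) (use that in \<open>auto simp: N_def\<close>)
      thus ?thesis using PS by simp
    qed
    hence "prob N \<le> 0" by (intro LIMSEQ_le_const[OF tail_lim]) auto
    hence "prob N = 0" using measure_nonneg[of M N] by linarith
    thus "N \<in> null_sets M" using N by (simp add: null_sets_def emeasure_eq_measure)
    show "{\<omega>\<in>space M. \<not> (\<exists>n\<ge>1. b < S n \<omega>)} \<subseteq> N" by (auto simp: N_def not_less)
  qed
  define T where "T = first_passage Y b"
  have T_eq: "T = (\<lambda>\<omega>. LEAST n. n \<ge> 1 \<and> b < S n \<omega>)"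
    by (simp add: T_def S_def first_passage_def[abs_def])
  have Tm[measurable]: "T \<in> measurable M (count_space UNIV)"
    unfolding T_eq by measurable
  have PT: "prob {\<omega>\<in>space M. n < T \<omega>} = tail n" for n
  proof -
    have "prob {\<omega>\<in>space M. n < T \<omega>} = prob {\<omega>\<in>space M. S n \<omega> \<le> b}"
    proof (rule measure_eq_AE)
      show "AE \<omega> in M. (\<omega> \<in> {\<omega>\<in>space M. n < T \<omega>}) = (\<omega> \<in> {\<omega>\<in>space M. S n \<omega> \<le> b})"
        using pos ex
      proof eventually_elim
        case (elim \<omega>)
        have "n < T \<omega> \<longleftrightarrow> S n \<omega> \<le> b"
          unfolding T_eq S_def using fp_gt[of "\<lambda>i. Y i \<omega>" b n] elim b by (simp add: S_def)
        thus ?case by simp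
      qed
    qed measurable
    thus ?thesis using PS by simp
  qed
  have PT1: "prob {\<omega>\<in>space M. T \<omega> = k} = (if k = 0 then 0 else (\<Sum>j\<in>{(k - 1) * a..<(k - 1) * a + a}. pp \<mu> j))" for k
  proof (cases k)
    case 0
    have "prob ({\<omega>\<in>space M. T \<omega> = 0} \<union> {\<omega>\<in>space M. 0 < T \<omega>}) = prob {\<omega>\<in>space M. T \<omega> = 0} + prob {\<omega>\<in>space M. 0 < T \<omega>}"
      by (rule finite_measure_Union) auto
    moreover have "{\<omega>\<in>space M. T \<omega> = 0} \<union> {\<omega>\<in>space M. 0 < T \<omega>} = space M" by auto
    ultimately have "prob {\<omega>\<in>space M. T \<omega> = 0} = 1 - tail 0" using PT[of 0] by (simp add: prob_space)
    thus ?thesis using 0 by (simp add: tail_def)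
  next
    case (Suc k')
    have "prob ({\<omega>\<in>space M. T \<omega> = Suc k'} \<union> {\<omega>\<in>space M. Suc k' < T \<omega>}) = prob {\<omega>\<in>space M. T \<omega> = Suc k'} + prob {\<omega>\<in>space M. Suc k' < T \<omega>}"
      by (rule finite_measure_Union) auto
    moreover have "{\<omega>\<in>space M. T \<omega> = Suc k'} \<union> {\<omega>\<in>space M. Suc k' < T \<omega>} = {\<omega>\<in>space M. k' < T \<omega>}" by auto
    ultimately have "prob {\<omega>\<in>space M. T \<omega> = Suc k'} = tail k' - tail (Suc k')" using PT[of k'] PT[of "Suc k'"] by simp
    also have "\<dots> = (\<Sum>j\<in>{k' * a..<k' * a + a}. pp \<mu> j)"
    proof -
      have "(\<Sum>j<Suc k' * a. pp \<mu> j) = (\<Sum>j\<in>{0..<k' * a}. pp \<mu> j) + (\<Sum>j\<in>{k' * a..<k' * a + a}. pp \<mu> j)"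
        by (subst sum.atLeastLessThan_concat) (auto simp: lessThan_atLeast0 add.commute)
      thus ?thesis by (simp add: tail_def lessThan_atLeast0)
    qed
    finally show ?thesis using Suc by simp
  qed
  define Q where "Q = map_pmf (\<lambda>j. Suc (j div a)) (poisson_pmf \<mu>)"
  have distr_eq: "distr M (count_space UNIV) T = measure_pmf Q"
  proof (rule measure_eqI_countable[where A = UNIV])
    fix k :: nat
    have "emeasure (distr M (count_space UNIV) T) {k} = emeasure M (T -` {k} \<inter> space M)"
      by (rule emeasure_distr) auto
    also have "T -` {k} \<inter> space M = {\<omega>\<in>space M. T \<omega> = k}" by auto
    also have "emeasure M \<dots> = ennreal (prob {\<omega>\<in>space M. T \<omega> = k})" by (simp add: emeasure_eq_measure)
    also have "prob {\<omega>\<in>space M. T \<omega> = k} = pmf Q k"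
    proof -
      have "pmf Q k = measure (poisson_pmf \<mu>) ((\<lambda>j. Suc (j div a)) -` {k})" by (simp add: Q_def pmf_map)
      also have "\<dots> = (if k = 0 then 0 else (\<Sum>j\<in>{(k - 1) * a..<(k - 1) * a + a}. pp \<mu> j))"
      proof (cases k)
        case 0
        have "(\<lambda>j. Suc (j div a)) -` {k} = {}" using 0 by auto
        thus ?thesis using 0 by simp
      next
        case (Suc k')
        have "(\<lambda>j. Suc (j div a)) -` {k} = {k' * a..<k' * a + a}"
          by (rule set_eqI) (simp add: Suc div_block[OF a])
        thus ?thesis using Suc mu by (simp add: measure_measure_pmf_finite pp_def)
      qed
      finally show ?thesis using PT1 by simp
    qed
    also have "ennreal (pmf Q k) = emeasure (measure_pmf Q) {k}" by (simp add: emeasure_pmf_single)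
    finally show "emeasure (distr M (count_space UNIV) T) {k} = emeasure (measure_pmf Q) {k}" .
  qed auto
  have int_eq: "expectation (\<lambda>\<omega>. h (T \<omega>)) = measure_pmf.expectation (poisson_pmf \<mu>) (\<lambda>j. h (Suc (j div a)))"
    for h :: "nat \<Rightarrow> real"
  proof -
    have "expectation (\<lambda>\<omega>. h (T \<omega>)) = integral\<^sup>L (distr M (count_space UNIV) T) h"
      by (rule integral_distr[symmetric]) auto
    also have "\<dots> = measure_pmf.expectation Q h" by (simp add: distr_eq)
    also have "\<dots> = measure_pmf.expectation (poisson_pmf \<mu>) (\<lambda>j. h (Suc (j div a)))"
      by (simp add: Q_def)
    finally show ?thesis .
  qed
  have E: "expectation (\<lambda>\<omega>. real (T \<omega>)) = mf a \<mu>"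
    using int_eq[of real] pois_integral[OF mu X_sums[OF a]] by simp
  have "variance (\<lambda>\<omega>. real (T \<omega>)) = expectation (\<lambda>\<omega>. (real (T \<omega>) - mf a \<mu>)^2)"
    by (simp add: E)
  also have "\<dots> = Vf a \<mu>"
    using int_eq[of "\<lambda>k. (real k - mf a \<mu>)^2"] pois_integral[OF mu V_sums[OF a]] by simp
  finally show ?thesis by (simp add: T_def \<mu>_def)
qed



theorem corollary2:
  fixes M :: "'a measure" and Y :: "nat \<Rightarrow> 'a \<Rightarrow> real"
    and \<alpha> :: nat and l :: real
  assumes "prob_space M"
    and "\<alpha> > 1" and "l > 0"
    and "prob_space.indep_vars M (\<lambda>_. borel) Y {1..}"
    and "\<And>i. i \<ge> 1 \<Longrightarrow> distributed M lborel (Y i) (erlang_density (\<alpha> - 1) l)"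
  shows "((\<lambda>b. prob_space.variance M (\<lambda>\<omega>. real (first_passage Y b \<omega>))
              - (l * b / real \<alpha> ^ 2 + (1 / 12) * (1 - 1 / real \<alpha> ^ 2)))
          \<longlongrightarrow> 0) at_top"
proof -
  interpret prob_space M by fact
  have a: "\<alpha> > 0" using assms(2) by simp
  have ml: "filterlim (\<lambda>b. l * b) at_top at_top"
    by (rule filterlim_tendsto_pos_mult_at_top[OF tendsto_const assms(3) filterlim_ident])
  have lim: "((\<lambda>b. Vf \<alpha> (l * b) - (l * b / real \<alpha> ^ 2 + 1 / 12 * (1 - 1 / real \<alpha> ^ 2))) \<longlongrightarrow> 0) at_top"
    using filterlim_compose[OF Vf_lim[OF a] ml] by simp
  have "eventually (\<lambda>b. Vf \<alpha> (l * b) - (l * b / real \<alpha> ^ 2 + 1 / 12 * (1 - 1 / real \<alpha> ^ 2)) =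
      variance (\<lambda>\<omega>. real (first_passage Y b \<omega>)) - (l * b / real \<alpha> ^ 2 + 1 / 12 * (1 - 1 / real \<alpha> ^ 2))) at_top"
    using eventually_gt_at_top[of "0::real"]
  proof eventually_elim
    case (elim b)
    show ?case using var_eq[OF a assms(3) elim assms(4) assms(5)] by simp
  qed
  from Lim_transform_eventually[OF lim this] show ?thesis by simp
qed

end
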